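(* Let $(x_+,x_-,1)$ be an efficient solution of the QCQP (i.e. with robustness level $r=1$). Let $v=(1,x_+^T,x_-^T,1)^T\in\mathbb{R}^{2n+2}$. Then the rank-one matrix $Z=vv^T$ is feasible and efficient for the SDP relaxation.
   Context: Let $k,m,n\in\mathbb{N}$. Let $A_c,A_\delta\in\mathbb{R}^{m\times n}$ with $A_\delta\ge 0$ entrywise, $b_c,b_\delta\in\mathbb{R}^m$ with $b_\delta\ge0$, $G\in\mathbb{R}^{k\times n}$, and $\ell,u\in\mathbb{R}^n$ with $\ell\le u$. All vector inequalities are componentwise. QCQP: variables $x_+,x_-\in\mathbb{R}^n_{\ge0}$, $r\in[0,1]$, subject to $A_cx_+-A_cx_-+rA_\delta x_++rA_\delta x_-+rb_\delta-b_c\le0$ and $\ell\le x_+-x_-\le u$; vector objective $F(x_+,x_-,r)=(G(x_+-x_-),-r)\in\mathbb{R}^{k+1}$, minimized in the Pareto sense. SDP relaxation: variable a symmetric positive semidefinite matrix $Z$ of size $(2n+2)\times(2n+2)$ written in block form with row/column blocks of sizes $1,n,n,1$: $Z=\begin{pmatrix} Z_{00} & z_+^T & z_-^T & \rho\\ z_+ & * & * & w_+\\ z_- & * & * & w_-\\ \rho & w_+^T & w_-^T & \sigma\end{pmatrix}$, with $z_\pm,w_\pm\in\mathbb{R}^n$, $\rho,\sigma\in\mathbb{R}$. Constraints: $Z_{00}=1$; $A_cz_+-A_cz_-+A_\delta(w_++w_-)+\rho\, b_\delta-b_c\le0$; $\ell\le z_+-z_-\le u$; $z_+,z_-\ge0$,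 $\rho\ge0$, $w_+,w_-\ge0$; $\sigma\le1$. Vector objective $(G(z_+-z_-),-\rho)\in\mathbb{R}^{k+1}$, minimized in the Pareto sense. Efficiency (for minimizing a vector function $f$ over a feasible set $\mathcal{X}$): $x^*\in\mathcal{X}$ is efficient if there is no $x\in\mathcal{X}$ with $f(x)\le f(x^* )$ and $f(x)\ne f(x^* )$. *)

theory Defs
  imports "HOL-Analysis.Analysis"
begin

text \<open>Index type for the (2n+2)x(2n+2) SDP matrix, with row/column blocks of sizes 1, n, n, 1:
  I0 is the first index, IP j the j-th index of the x_+ block, IM j the j-th index of
  the x_- block, IS the last index.\<close>
datatype 'n sdpidx = I0 | IP 'n | IM 'n | IS

lemma UNIV_sdpidx: "(UNIV :: 'n sdpidx set) = {I0, IS} \<union> range IP \<union> range IM"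
proof -
  have "x \<in> {I0, IS} \<union> range IP \<union> range IM" for x :: "'n sdpidx"
    by (cases x) auto
  then show ?thesis by blast
qed

instance sdpidx :: (finite) finite
  by standard (simp add: UNIV_sdpidx)

definition vle :: "real ^ 'a \<Rightarrow> real ^ 'a \<Rightarrow> bool" where
  "vle x y \<longleftrightarrow> (\<forall>i. x $ i \<le> y $ i)"

text \<open>Componentwise order on the objective space R^(k+1), represented as R^k x R.\<close>
definition objle :: "(real ^ 'k) \<times> real \<Rightarrow> (real ^ 'k) \<times> real \<Rightarrow> bool" where
  "objle a b \<longleftrightarrow> vle (fst a) (fst b) \<and> snd a \<le> snd b"

definition efficient :: "('x \<Rightarrow> (real ^ 'k) \<times> real) \<Rightarrow> 'x set \<Rightarrow> 'x \<Rightarrow> bool" where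
  "efficient f X xs \<longleftrightarrow> xs \<in> X \<and> \<not> (\<exists>x\<in>X. objle (f x) (f xs) \<and> f x \<noteq> f xs)"

definition psd :: "real ^ 'i ^ 'i \<Rightarrow> bool" where
  "psd Z \<longleftrightarrow> transpose Z = Z \<and> (\<forall>x. 0 \<le> x \<bullet> (Z *v x))"

definition qcqp_feasible ::
  "real ^ 'n ^ 'm \<Rightarrow> real ^ 'n ^ 'm \<Rightarrow> real ^ 'm \<Rightarrow> real ^ 'm \<Rightarrow> real ^ 'n \<Rightarrow> real ^ 'n
   \<Rightarrow> ((real ^ 'n) \<times> (real ^ 'n) \<times> real) set" where
  "qcqp_feasible Ac Ad bc bd l u = {(xp, xm, r).
      vle 0 xp \<and> vle 0 xm \<and> 0 \<le> r \<and> r \<le> 1 \<and>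
      vle (Ac *v xp - Ac *v xm + r *\<^sub>R (Ad *v xp) + r *\<^sub>R (Ad *v xm) + r *\<^sub>R bd - bc) 0 \<and>
      vle l (xp - xm) \<and> vle (xp - xm) u}"

definition qcqp_obj :: "real ^ 'n ^ 'k \<Rightarrow> (real ^ 'n) \<times> (real ^ 'n) \<times> real \<Rightarrow> (real ^ 'k) \<times> real" where
  "qcqp_obj G = (\<lambda>(xp, xm, r). (G *v (xp - xm), - r))"

definition zP :: "real ^ ('n::finite) sdpidx ^ 'n sdpidx \<Rightarrow> real ^ 'n" where
  "zP Z = (\<chi> j. Z $ IP j $ I0)"
definition zM :: "real ^ ('n::finite) sdpidx ^ 'n sdpidx \<Rightarrow> real ^ 'n" where
  "zM Z = (\<chi> j. Z $ IM j $ I0)"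
definition wP :: "real ^ ('n::finite) sdpidx ^ 'n sdpidx \<Rightarrow> real ^ 'n" where
  "wP Z = (\<chi> j. Z $ IP j $ IS)"
definition wM :: "real ^ ('n::finite) sdpidx ^ 'n sdpidx \<Rightarrow> real ^ 'n" where
  "wM Z = (\<chi> j. Z $ IM j $ IS)"
definition rho :: "real ^ ('n::finite) sdpidx ^ 'n sdpidx \<Rightarrow> real" where
  "rho Z = Z $ IS $ I0"
definition sigma :: "real ^ ('n::finite) sdpidx ^ 'n sdpidx \<Rightarrow> real" where
  "sigma Z = Z $ IS $ IS"

definition sdp_feasible ::
  "real ^ 'n ^ 'm \<Rightarrow> real ^ 'n ^ 'm \<Rightarrow> real ^ 'm \<Rightarrow> real ^ 'm \<Rightarrow> real ^ 'n \<Rightarrow> real ^ 'n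
   \<Rightarrow> (real ^ ('n::finite) sdpidx ^ 'n sdpidx) set" where
  "sdp_feasible Ac Ad bc bd l u = {Z.
      psd Z \<and> Z $ I0 $ I0 = 1 \<and>
      vle (Ac *v zP Z - Ac *v zM Z + Ad *v (wP Z + wM Z) + rho Z *\<^sub>R bd - bc) 0 \<and>
      vle l (zP Z - zM Z) \<and> vle (zP Z - zM Z) u \<and>
      vle 0 (zP Z) \<and> vle 0 (zM Z) \<and> 0 \<le> rho Z \<and> vle 0 (wP Z) \<and> vle 0 (wM Z) \<and>
      sigma Z \<le> 1}"

definition sdp_obj :: "real ^ 'n ^ 'k \<Rightarrow> real ^ ('n::finite) sdpidx ^ 'n sdpidx \<Rightarrow> (real ^ 'k) \<times> real" where
  "sdp_obj G Z = (G *v (zP Z - zM Z), - rho Z)"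

definition liftvec :: "real ^ 'n \<Rightarrow> real ^ 'n \<Rightarrow> real ^ ('n::finite) sdpidx" where
  "liftvec xp xm = (\<chi> i. case i of I0 \<Rightarrow> 1 | IP j \<Rightarrow> xp $ j | IM j \<Rightarrow> xm $ j | IS \<Rightarrow> 1)"

definition outer :: "real ^ 'i \<Rightarrow> real ^ 'i ^ 'i" where
  "outer v = (\<chi> i j. v $ i * v $ j)"

end

theory Submission
  imports Defs
begin

lemma outer_mult: "outer v *v x = (v \<bullet> x) *\<^sub>R v"
  by (simp add: vec_eq_iff outer_def matrix_vector_mult_def inner_vec_def sum_distrib_left
      sum_distrib_right mult_ac)

lemma psd_outer: "psd (outer v)"
  unfolding psd_def
proof
  show "transpose (outer v) = outer v"
    by (simp add: vec_eq_iff outer_def transpose_def mult.commute)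
  show "\<forall>x. 0 \<le> x \<bullet> (outer v *v x)"
    by (simp add: outer_mult inner_commute)
qed

lemma lift_blocks:
  fixes xp xm :: "real ^ ('n::finite)"
  shows "zP (outer (liftvec xp xm)) = xp" "zM (outer (liftvec xp xm)) = xm"
    "wP (outer (liftvec xp xm)) = xp" "wM (outer (liftvec xp xm)) = xm"
    "rho (outer (liftvec xp xm)) = 1" "sigma (outer (liftvec xp xm)) = 1"
    "outer (liftvec xp xm) $ I0 $ I0 = 1"
  by (simp_all add: vec_eq_iff zP_def zM_def wP_def wM_def rho_def sigma_def outer_def liftvec_def)

lemma quadform_sum:
  fixes Z :: "real ^ 'i ^ 'i" and x :: "real ^ 'i"
  shows "x \<bullet> (Z *v x) = (\<Sum>i\<in>UNIV. \<Sum>j\<in>UNIV. x$i * Z$i$j * x$j)"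
  by (simp add: inner_vec_def matrix_vector_mult_def sum_distrib_left mult_ac)

lemma psd_sym:
  fixes Z :: "real ^ 'i ^ 'i"
  assumes psd: "psd Z"
  shows "Z$j$i = Z$i$j"
proof -
  have tZ: "transpose Z = Z" using psd unfolding psd_def by simp
  have "(transpose Z)$j$i = Z$i$j" by (simp add: transpose_def)
  thus ?thesis using tZ by simp
qed

lemma psd_quad3:
  fixes Z :: "real ^ ('i::finite) ^ 'i"
  assumes "psd Z" "p \<noteq> q" "p \<noteq> r" "q \<noteq> r"
  shows "0 \<le> a*a*Z$p$p + b*b*Z$q$q + c*c*Z$r$r + 2*a*b*Z$p$q + 2*a*c*Z$p$r + 2*b*c*Z$q$r"
proof -
  define x :: "real ^ 'i" where "x = (\<chi> i. if i = p then a else if i = q then b else if i = r then c else 0)"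
  have sym: "Z$j$i = Z$i$j" for i j
    using psd_sym[OF assms(1)] .
  have "0 \<le> x \<bullet> (Z *v x)" using assms(1) unfolding psd_def by blast
  also have "x \<bullet> (Z *v x) = (\<Sum>i\<in>{p,q,r}. \<Sum>j\<in>{p,q,r}. x$i * Z$i$j * x$j)"
  proof -
    have xz: "x$i = 0" if "i \<notin> {p,q,r}" for i using that by (simp add: x_def)
    have inner: "(\<Sum>j\<in>UNIV. x$i * Z$i$j * x$j) = (\<Sum>j\<in>{p,q,r}. x$i * Z$i$j * x$j)" for i
      by (rule sum.mono_neutral_right) (auto simp: xz)
    show ?thesis unfolding quadform_sum inner
      by (rule sum.mono_neutral_right) (auto simp: xz)
  qed
  also have "\<dots> = a*a*Z$p$p + b*b*Z$q$q + c*c*Z$r$r + 2*a*b*Z$p$q + 2*a*c*Z$p$r + 2*b*c*Z$q$r"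
    using assms(2-4) by (simp add: x_def sym[of p q] sym[of p r] sym[of q r] algebra_simps)
  finally show ?thesis .
qed

lemma quad_zero:
  fixes M d :: real
  assumes "\<forall>c. 0 \<le> c*c*M + 2*c*d"
  shows "d = 0"
proof -
  define t where "t = \<bar>M\<bar> + 1"
  have t: "t > 0" by (simp add: t_def add_pos_nonneg)
  have "0 \<le> (-d/t)*(-d/t)*M + 2*(-d/t)*d" using assms by blast
  hence "0 \<le> t*t*((-d/t)*(-d/t)*M + 2*(-d/t)*d)" using t by simp
  also have "t*t*((-d/t)*(-d/t)*M + 2*(-d/t)*d) = d*d*(M - 2*t)"
    using t by (simp add: field_simps)
  finally have "0 \<le> d*d*(M - 2*t)" .
  moreover have "M - 2*t < 0" unfolding t_def by (cases "M \<ge> 0") auto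
  ultimately have "d*d \<le> 0" by (simp add: mult_le_0_iff zero_le_mult_iff)
  thus ?thesis by (auto simp: mult_le_0_iff)
qed

lemma sdp_collapse:
  fixes Z :: "real ^ ('n::finite) sdpidx ^ 'n sdpidx"
  assumes Z: "Z \<in> sdp_feasible Ac Ad bc bd l u" and r: "rho Z \<ge> 1"
  shows "rho Z = 1" "wP Z = zP Z" "wM Z = zM Z"
proof -
  have psd: "psd Z" and z00: "Z$I0$I0 = 1" and sg: "sigma Z \<le> 1"
    using Z unfolding sdp_feasible_def by simp_all
  have sym: "Z$j$i = Z$i$j" for i j
    using psd_sym[OF psd] .
  have q: "0 \<le> a*a*Z$I0$I0 + b*b*Z$IS$IS + c*c*Z$r$r + 2*a*b*Z$I0$IS + 2*a*c*Z$I0$r + 2*b*c*Z$IS$r"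
    if "r \<noteq> I0" "r \<noteq> IS" for a b c r
    using psd_quad3[OF psd, of I0 IS r a b c] that by simp
  have e1: "Z$I0$IS = rho Z" using sym[of I0 IS] by (simp add: rho_def)
  have e2: "Z$IS$IS = sigma Z" by (simp add: sigma_def)
  have "0 \<le> 1 + sigma Z - 2 * rho Z"
    using q[of "IP undefined" 1 "-1" 0] z00 e1 e2 by simp
  thus rho1: "rho Z = 1" using r sg by linarith
  have sig1: "sigma Z = 1" using \<open>0 \<le> 1 + sigma Z - 2 * rho Z\<close> rho1 sg by linarith
  have col: "Z$I0$r = Z$IS$r" if "r \<noteq> I0" "r \<noteq> IS" for r
  proof -
    have "\<forall>c. 0 \<le> c*c*Z$r$r + 2*c*(Z$I0$r - Z$IS$r)"
    proof
      fix c
      show "0 \<le> c*c*Z$r$r + 2*c*(Z$I0$r - Z$IS$r)"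
      proof -
        have h: "0 \<le> 1*1*Z$I0$I0 + (-1)*(-1)*Z$IS$IS + c*c*Z$r$r + 2*1*(-1)*Z$I0$IS
            + 2*1*c*Z$I0$r + 2*(-1)*c*Z$IS$r"
          using q[OF that, of 1 "-1" c] .
        have "2*c*(Z$I0$r - Z$IS$r) = 2*c*Z$I0$r - 2*c*Z$IS$r"
          by (simp add: right_diff_distrib)
        with h show ?thesis unfolding z00 e1 e2 rho1 sig1 by linarith
      qed
    qed
    from quad_zero[OF this] show ?thesis by simp
  qed
  show "wP Z = zP Z"
  proof -
    have "Z$IP j$IS = Z$IP j$I0" for j
      using col[of "IP j"] sym[of "IP j" IS] sym[of "IP j" I0] by simp
    thus ?thesis unfolding wP_def zP_def vec_eq_iff by simp
  qed
  show "wM Z = zM Z"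
  proof -
    have "Z$IM j$IS = Z$IM j$I0" for j
      using col[of "IM j"] sym[of "IM j" IS] sym[of "IM j" I0] by simp
    thus ?thesis unfolding wM_def zM_def vec_eq_iff by simp
  qed
qed

theorem mainTheorem5:
  fixes Ac Ad :: "real ^ 'n ^ 'm" and bc bd :: "real ^ 'm" and G :: "real ^ 'n ^ 'k"
    and l u xp xm :: "real ^ 'n"
  assumes "\<forall>i j. 0 \<le> Ad $ i $ j"
    and "vle 0 bd"
    and "vle l u"
    and "efficient (qcqp_obj G) (qcqp_feasible Ac Ad bc bd l u) (xp, xm, 1)"
  shows "outer (liftvec xp xm) \<in> sdp_feasible Ac Ad bc bd l u
    \<and> efficient (sdp_obj G) (sdp_feasible Ac Ad bc bd l u) (outer (liftvec xp xm))"
proof -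
  let ?Z0 = "outer (liftvec xp xm)"
  have qf: "(xp, xm, 1) \<in> qcqp_feasible Ac Ad bc bd l u"
    and noq: "\<not> (\<exists>x\<in>qcqp_feasible Ac Ad bc bd l u. objle (qcqp_obj G x) (qcqp_obj G (xp, xm, 1))
                 \<and> qcqp_obj G x \<noteq> qcqp_obj G (xp, xm, 1))"
    using assms(4) unfolding efficient_def by auto
  have feas: "?Z0 \<in> sdp_feasible Ac Ad bc bd l u"
    using qf unfolding sdp_feasible_def qcqp_feasible_def
    by (simp add: lift_blocks psd_outer matrix_vector_right_distrib add.assoc)
  have "\<not> (\<exists>Z\<in>sdp_feasible Ac Ad bc bd l u. objle (sdp_obj G Z) (sdp_obj G ?Z0) \<and> sdp_obj G Z \<noteq> sdp_obj G ?Z0)"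
  proof
    assume "\<exists>Z\<in>sdp_feasible Ac Ad bc bd l u. objle (sdp_obj G Z) (sdp_obj G ?Z0) \<and> sdp_obj G Z \<noteq> sdp_obj G ?Z0"
    then obtain Z where Z: "Z \<in> sdp_feasible Ac Ad bc bd l u"
      and le: "objle (sdp_obj G Z) (sdp_obj G ?Z0)" and ne: "sdp_obj G Z \<noteq> sdp_obj G ?Z0" by blast
    have r: "rho Z \<ge> 1" using le by (simp add: objle_def sdp_obj_def lift_blocks)
    note c = sdp_collapse[OF Z r]
    have mem: "(zP Z, zM Z, 1) \<in> qcqp_feasible Ac Ad bc bd l u"
      using Z c unfolding sdp_feasible_def qcqp_feasible_def
      by (simp add: matrix_vector_right_distrib add.assoc)
    have e1: "qcqp_obj G (zP Z, zM Z, 1) = sdp_obj G Z"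
      using c by (simp add: qcqp_obj_def sdp_obj_def)
    have e2: "qcqp_obj G (xp, xm, 1) = sdp_obj G ?Z0"
      by (simp add: qcqp_obj_def sdp_obj_def lift_blocks)
    have "objle (qcqp_obj G (zP Z, zM Z, 1)) (qcqp_obj G (xp, xm, 1))
       \<and> qcqp_obj G (zP Z, zM Z, 1) \<noteq> qcqp_obj G (xp, xm, 1)"
      unfolding e1 e2 using le ne by blast
    thus False using noq mem by blast
  qed
  thus ?thesis using feas unfolding efficient_def by blast
qed

end
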